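(* Let $f:\mathbb{R}^d\to\mathbb{R}$ be convex and differentiable with $L$-Lipschitz gradient and a minimizer $x^*$. For $x\in\mathbb{R}^d$ let $\phi_x(\lambda)=f(x-\lambda\nabla f(x))$. Let $x_1=y_1\in\mathbb{R}^d$, $\lambda_0\ge1/(3L)$, $\beta_1=1$, $\beta_{k+1}=\frac{1+\sqrt{1+4\beta_k^2}}{2}$, and for $k\ge1$: $\lambda_k=\max\{\lambda\in(0,\lambda_{k-1}]:\ \phi_{x_k}(2\lambda)\le\phi_{x_k}(\lambda)+\tfrac{\lambda}{2}\phi_{x_k}'(0)\}$, $y_{k+1}=x_k-\lambda_k\nabla f(x_k)$, $x_{k+1}=y_{k+1}+\frac{\beta_k-1}{\beta_{k+1}}(y_{k+1}-y_k)$. Then $\lambda_k\ge1/(3L)$ for all $k\ge1$, and there is a constant $D'$ depending only on $x_1$, $x^*$, $L$ such that $f(y_{k+1})-f(x^* )\le D'/k^2$ for all $k\ge1$.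
   Context: $\mathbb{R}^d$ carries the standard inner product and Euclidean norm $\|\cdot\|$; $\phi_x'(0)=-\|\nabla f(x)\|^2$ denotes the derivative of $\phi_x$ at $0$. This is the case $h\equiv0$ of the accelerated composite scheme, where the gradient mapping reduces to $\nabla f$. *)

theory Defs
  imports "HOL-Analysis.Analysis"
begin

definition phi :: "(real^'d \<Rightarrow> real) \<Rightarrow> (real^'d \<Rightarrow> real^'d) \<Rightarrow> real^'d \<Rightarrow> real \<Rightarrow> real" where
  "phi f g x l = f (x - l *\<^sub>R g x)"

text \<open>Here phi_x'(0) = - norm (g x)^2.\<close>
definition accel_ls :: "(real^'d \<Rightarrow> real) \<Rightarrow> (real^'d \<Rightarrow> real^'d) \<Rightarrow> real \<Rightarrow> real^'d \<Rightarrow>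
    (nat \<Rightarrow> real^'d) \<Rightarrow> (nat \<Rightarrow> real^'d) \<Rightarrow> (nat \<Rightarrow> real) \<Rightarrow> (nat \<Rightarrow> real) \<Rightarrow> bool" where
  "accel_ls f g L xs x y lam beta \<longleftrightarrow>
     convex_on UNIV f \<and>
     (\<forall>z. (f has_derivative (\<lambda>h. g z \<bullet> h)) (at z)) \<and>
     0 < L \<and> (\<forall>u v. norm (g u - g v) \<le> L * norm (u - v)) \<and>
     (\<forall>z. f xs \<le> f z) \<and>
     x 1 = y 1 \<and> lam 0 \<ge> 1 / (3 * L) \<and> beta 1 = 1 \<and>
     (\<forall>k\<ge>1. beta (Suc k) = (1 + sqrt (1 + 4 * (beta k)\<^sup>2)) / 2) \<and>
     (\<forall>k\<ge>1. lam k = (GREATEST l. 0 < l \<and> l \<le> lam (k - 1) \<and>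
          phi f g (x k) (2 * l) \<le> phi f g (x k) l + l / 2 * (- (norm (g (x k)))\<^sup>2))) \<and>
     (\<forall>k\<ge>1. y (Suc k) = x k - lam k *\<^sub>R g (x k)) \<and>
     (\<forall>k\<ge>1. x (Suc k) = y (Suc k) + ((beta k - 1) / beta (Suc k)) *\<^sub>R (y (Suc k) - y k))"

end

theory Submission
  imports Defs
begin

lemma conv_line:
  fixes f :: "'a::real_vector \<Rightarrow> real"
  assumes "convex_on UNIV f"
  shows "convex_on UNIV (\<lambda>t::real. f (a + t *\<^sub>R d))"
proof (rule convex_onI)
  fix s x y :: real assume s: "0 < s" "s < 1"
  have "a + ((1 - s) *\<^sub>R x + s *\<^sub>R y) *\<^sub>R d = (1 - s) *\<^sub>R (a + x *\<^sub>R d) + s *\<^sub>R (a + y *\<^sub>R d)"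
    by (simp add: algebra_simps)
  then show "f (a + ((1 - s) *\<^sub>R x + s *\<^sub>R y) *\<^sub>R d) \<le> (1 - s) * f (a + x *\<^sub>R d) + s * f (a + y *\<^sub>R d)"
    using convex_onD[OF assms, of s] s by simp
qed auto

lemma line_deriv:
  assumes "\<forall>z. (f has_derivative (\<lambda>h. g z \<bullet> h)) (at z)"
  shows "((\<lambda>t::real. f (a + t *\<^sub>R d)) has_real_derivative (g (a + t *\<^sub>R d) \<bullet> d)) (at t)"
proof -
  have 1: "((\<lambda>t::real. a + t *\<^sub>R d) has_derivative (\<lambda>h. h *\<^sub>R d)) (at t)"
    by (auto intro!: derivative_eq_intros)
  have "((\<lambda>t::real. f (a + t *\<^sub>R d)) has_derivative (\<lambda>h. g (a + t *\<^sub>R d) \<bullet> (h *\<^sub>R d))) (at t)"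
    using has_derivative_compose[OF 1 assms[rule_format, of "a + t *\<^sub>R d"]] by (simp add: o_def)
  then show ?thesis
    by (simp add: has_field_derivative_def mult_commute_abs)
qed

lemma grad_ineq:
  fixes f :: "real^'d \<Rightarrow> real"
  assumes "convex_on UNIV f" "\<forall>z. (f has_derivative (\<lambda>h. g z \<bullet> h)) (at z)"
  shows "f x + g x \<bullet> (z - x) \<le> f z"
proof -
  have "(\<lambda>t::real. f (x + t *\<^sub>R (z - x))) 1 - (\<lambda>t::real. f (x + t *\<^sub>R (z - x))) 0 \<ge> (g (x + 0 *\<^sub>R (z-x)) \<bullet> (z - x)) * (1 - 0)"
    apply (rule convex_on_imp_above_tangent[OF conv_line[OF assms(1)]])
    using line_deriv[OF assms(2), of x "z - x" 0] by (auto simp: has_field_derivative_at_within)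
  then show ?thesis by simp
qed

lemma descent:
  fixes f :: "real^'d \<Rightarrow> real"
  assumes der: "\<forall>z. (f has_derivative (\<lambda>h. g z \<bullet> h)) (at z)"
    and lip: "\<forall>u v. norm (g u - g v) \<le> L * norm (u - v)"
  shows "f y \<le> f x + g x \<bullet> (y - x) + L / 2 * (norm (y - x))\<^sup>2"
proof -
  define d where "d = y - x"
  define h where "h t = f (x + t *\<^sub>R d) - t * (g x \<bullet> d) - L / 2 * t^2 * (norm d)^2" for t
  have "h 1 \<le> h 0"
  proof (rule DERIV_nonpos_imp_nonincreasing[where a=0 and b=1, OF zero_le_one])
    fix t :: real assume t: "0 \<le> t" "t \<le> 1"
    have D: "DERIV h t :> g (x + t *\<^sub>R d) \<bullet> d - g x \<bullet> d - L / 2 * (2 * t) * (norm d)^2"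
      unfolding h_def
      by (rule line_deriv[OF der] derivative_eq_intros refl | simp)+
    have "g (x + t *\<^sub>R d) \<bullet> d - g x \<bullet> d = (g (x + t *\<^sub>R d) - g x) \<bullet> d" by (simp add: inner_diff_left)
    also have "\<dots> \<le> norm (g (x + t *\<^sub>R d) - g x) * norm d" by (rule norm_cauchy_schwarz)
    also have "\<dots> \<le> L * norm (t *\<^sub>R d) * norm d"
      using lip[rule_format, of "x + t *\<^sub>R d" x] by (simp add: mult_right_mono)
    also have "\<dots> = L / 2 * (2 * t) * (norm d)^2" using t by (simp add: power2_eq_square)
    finally show "\<exists>y. DERIV h t :> y \<and> y \<le> 0" using D by (intro exI[of _ "g (x + t *\<^sub>R d) \<bullet> d - g x \<bullet> d - L / 2 * (2 * t) * (norm d)^2"]) simp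
  qed
  then show ?thesis by (simp add: h_def d_def)
qed

lemma nsq: "(norm ((a::'a::real_inner) - b))\<^sup>2 = (norm a)\<^sup>2 - 2 * (a \<bullet> b) + (norm b)\<^sup>2"
  by (simp add: power2_norm_eq_inner inner_diff_left inner_diff_right inner_commute)

lemma ls_small:
  fixes f :: "real^'d \<Rightarrow> real"
  assumes der: "\<forall>z. (f has_derivative (\<lambda>h. g z \<bullet> h)) (at z)"
    and lip: "\<forall>u v. norm (g u - g v) \<le> L * norm (u - v)" and L: "0 < L"
    and l: "0 < l" "l \<le> 1 / (3 * L)"
  shows "phi f g x (2 * l) \<le> phi f g x l + l / 2 * (- (norm (g x))\<^sup>2)"
proof -
  define G where "G = g x"
  define a where "a = x - l *\<^sub>R G"
  have ba: "(x - (2 * l) *\<^sub>R G) - a = - (l *\<^sub>R G)"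
  proof -
    have "(2 * l) *\<^sub>R G = l *\<^sub>R G + l *\<^sub>R G" by (metis mult_2 scaleR_left_distrib)
    then show ?thesis by (simp add: a_def algebra_simps)
  qed
  have d: "f (x - (2 * l) *\<^sub>R G) \<le> f a + g a \<bullet> (- (l *\<^sub>R G)) + L / 2 * (norm (l *\<^sub>R G))\<^sup>2"
    using descent[OF der lip, of "x - (2 * l) *\<^sub>R G" a] ba by simp
  have "(g a - G) \<bullet> G \<ge> - (norm (g a - G) * norm G)"
    using Cauchy_Schwarz_ineq2[of "g a - G" G] by linarith
  moreover have "norm (g a - G) \<le> L * (l * norm G)"
    using lip[rule_format, of a x] l by (simp add: a_def G_def)
  ultimately have "(g a - G) \<bullet> G \<ge> - (L * l * (norm G)^2)"
    by (smt (verit, ccfv_SIG) mult.assoc mult_right_mono norm_ge_zero power2_eq_square)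
  then have "g a \<bullet> (- (l *\<^sub>R G)) \<le> - l * (norm G)^2 + l * (L * l * (norm G)^2)"
  proof -
    from \<open>(g a - G) \<bullet> G \<ge> - (L * l * (norm G)^2)\<close>
    have h: "G \<bullet> G \<le> g a \<bullet> G + L * l * (G \<bullet> G)" by (simp add: inner_diff_left power2_norm_eq_inner)
    have "l * (G \<bullet> G) \<le> l * (g a \<bullet> G + L * l * (G \<bullet> G))" using mult_left_mono[OF h] l by simp
    then show ?thesis by (simp add: power2_norm_eq_inner algebra_simps)
  qed
  moreover have eqn: "L / 2 * (norm (l *\<^sub>R G))\<^sup>2 = L / 2 * l^2 * (norm G)^2"
    using l by (simp add: power_mult_distrib)
  moreover have "3 * L * l \<le> 1" using l L by (simp add: field_simps)
  then have "l * (L * l * (norm G)^2) + L / 2 * l^2 * (norm G)^2 \<le> l / 2 * (norm G)^2"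
  proof -
    have "l * (L * l * (norm G)^2) + L / 2 * l^2 * (norm G)^2 = (3 * L * l) * (l / 2 * (norm G)^2)"
      by (simp add: power2_eq_square algebra_simps)
    also have "\<dots> \<le> 1 * (l / 2 * (norm G)^2)"
      by (rule mult_right_mono) (use \<open>3 * L * l \<le> 1\<close> l in auto)
    finally show ?thesis by simp
  qed
  ultimately have "f (x - (2 * l) *\<^sub>R G) \<le> f a - l / 2 * (norm G)^2"
    using d unfolding eqn by linarith
  then show ?thesis by (simp add: phi_def a_def G_def)
qed

lemma ls_decrease:
  fixes f :: "real^'d \<Rightarrow> real"
  assumes cv: "convex_on UNIV f"
    and P: "phi f g x (2 * l) \<le> phi f g x l + l / 2 * (- (norm (g x))\<^sup>2)"
  shows "f (x - l *\<^sub>R g x) \<le> f x - l / 2 * (norm (g x))\<^sup>2"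
proof -
  have e: "x - l *\<^sub>R g x = (1 - 1/2) *\<^sub>R x + (1/2) *\<^sub>R (x - (2 * l) *\<^sub>R g x)"
  proof -
    have "(1/2) *\<^sub>R (x - (2 * l) *\<^sub>R g x) = (1/2) *\<^sub>R x - l *\<^sub>R g x" by (simp add: scaleR_diff_right)
    moreover have "(1 - 1/2) *\<^sub>R x + (1/2) *\<^sub>R x = x" by (metis add_diff_cancel_left' scaleR_collapse)
    ultimately show ?thesis by (metis add_diff_eq)
  qed
  have "f (x - l *\<^sub>R g x) \<le> (1 - 1/2) * f x + (1/2) * f (x - (2 * l) *\<^sub>R g x)"
    unfolding e by (rule convex_onD[OF cv]) auto
  then show ?thesis using P by (simp add: phi_def)
qed

lemma key_ineq:
  fixes f :: "real^'d \<Rightarrow> real"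
  assumes cv: "convex_on UNIV f" and der: "\<forall>z. (f has_derivative (\<lambda>h. g z \<bullet> h)) (at z)"
    and l: "0 < l"
    and P: "phi f g x (2 * l) \<le> phi f g x l + l / 2 * (- (norm (g x))\<^sup>2)"
  shows "f (x - l *\<^sub>R g x) - f z \<le> ((norm (x - z))\<^sup>2 - (norm (x - l *\<^sub>R g x - z))\<^sup>2) / (2 * l)"
proof -
  have 1: "f (x - l *\<^sub>R g x) \<le> f x - l / 2 * (norm (g x))\<^sup>2" by (rule ls_decrease[OF cv P])
  have 2: "f x + g x \<bullet> (z - x) \<le> f z" by (rule grad_ineq[OF cv der])
  have 3: "(norm (x - z))\<^sup>2 - (norm (x - l *\<^sub>R g x - z))\<^sup>2 = 2 * l * (g x \<bullet> (x - z)) - l^2 * (norm (g x))\<^sup>2"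
  proof -
    have "x - l *\<^sub>R g x - z = (x - z) - l *\<^sub>R g x" by simp
    then show ?thesis by (simp only: nsq) (simp add: inner_diff_right inner_commute power_mult_distrib algebra_simps)
  qed
  have "f (x - l *\<^sub>R g x) - f z \<le> g x \<bullet> (x - z) - l / 2 * (norm (g x))\<^sup>2"
    using 1 2 by (simp add: inner_diff_right)
  also have "\<dots> = ((norm (x - z))\<^sup>2 - (norm (x - l *\<^sub>R g x - z))\<^sup>2) / (2 * l)"
    unfolding 3 using l by (simp add: field_simps power2_eq_square)
  finally show ?thesis .
qed

lemma greatest_ls:
  fixes f :: "real^'d \<Rightarrow> real" and x :: "real^'d"
  assumes der: "\<forall>z. (f has_derivative (\<lambda>h. g z \<bullet> h)) (at z)"
    and lip: "\<forall>u v. norm (g u - g v) \<le> L * norm (u - v)" and L: "0 < L"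
    and a: "0 < a"
  defines "m \<equiv> (GREATEST l. 0 < l \<and> l \<le> a \<and>
          phi f g x (2 * l) \<le> phi f g x l + l / 2 * (- (norm (g x))\<^sup>2))"
  shows "min a (1 / (3 * L)) \<le> m \<and> m \<le> a \<and>
         phi f g x (2 * m) \<le> phi f g x m + m / 2 * (- (norm (g x))\<^sup>2)"
proof -
  define m0 where "m0 = min a (1 / (3 * L))"
  have m0: "0 < m0" "m0 \<le> a" "m0 \<le> 1 / (3 * L)" using a L by (auto simp: m0_def)
  define F where "F l = phi f g x (2 * l) - phi f g x l + l / 2 * (norm (g x))\<^sup>2" for l
  have fc: "continuous_on UNIV f"
    using der has_derivative_continuous continuous_at_imp_continuous_on by blast
  have pc: "continuous_on UNIV (\<lambda>l. phi f g x (c * l))" for c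
    unfolding phi_def by (intro continuous_on_compose2[OF fc] continuous_intros) auto
  have Fc: "continuous_on UNIV F"
    unfolding F_def using pc[of 2] pc[of 1] by (intro continuous_intros) auto
  define T where "T = {l. m0 \<le> l} \<inter> {l. l \<le> a} \<inter> {l. F l \<le> 0}"
  have "closed T" unfolding T_def
    by (intro closed_Int closed_Collect_le Fc continuous_intros)
  moreover have "m0 \<in> T"
    using ls_small[OF der lip L m0(1) m0(3), of x] m0 by (simp add: T_def F_def)
  moreover have bd: "bdd_above T" unfolding T_def by (intro bdd_aboveI[of _ a]) auto
  ultimately have sT: "Sup T \<in> T" using closed_contains_Sup by blast
  have PF: "(0 < l \<and> l \<le> a \<and> phi f g x (2 * l) \<le> phi f g x l + l / 2 * (- (norm (g x))\<^sup>2))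
      \<longleftrightarrow> 0 < l \<and> l \<le> a \<and> F l \<le> 0" for l
    by (auto simp: F_def)
  have "m = Sup T"
    unfolding m_def PF
  proof (rule Greatest_equality)
    show "0 < Sup T \<and> Sup T \<le> a \<and> F (Sup T) \<le> 0" using sT m0 by (auto simp: T_def)
    fix y assume y: "0 < y \<and> y \<le> a \<and> F y \<le> 0"
    show "y \<le> Sup T"
    proof (cases "m0 \<le> y")
      case True
      then have "y \<in> T" using y by (auto simp: T_def)
      then show ?thesis using cSup_upper[OF _ bd] by blast
    next
      case False
      then show ?thesis using sT by (auto simp: T_def)
    qed
  qed
  then show ?thesis using sT by (auto simp: T_def F_def m0_def)
qed

lemma beta_facts:
  assumes b1: "beta 1 = 1" and brec: "\<forall>k\<ge>1. beta (Suc k) = (1 + sqrt (1 + 4 * (beta k)\<^sup>2)) / 2"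
  shows "\<forall>k\<ge>1. (real k + 1) / 2 \<le> beta k \<and> 1 \<le> beta k \<and> (beta (Suc k))\<^sup>2 - beta (Suc k) = (beta k)\<^sup>2"
proof (intro allI impI)
  fix k :: nat assume k: "1 \<le> k"
  have lb: "(real k + 1) / 2 \<le> beta k" if "1 \<le> k" for k
    using that
  proof (induction k rule: dec_induct)
    case base then show ?case using b1 by simp
  next
    case (step n)
    have "2 * beta n \<le> sqrt (1 + 4 * (beta n)\<^sup>2)"
      by (rule real_le_rsqrt) (simp add: power_mult_distrib)
    then show ?case using step brec by simp
  qed
  have sq: "(beta (Suc k))\<^sup>2 - beta (Suc k) = (beta k)\<^sup>2"
  proof -
    define s where "s = sqrt (1 + 4 * (beta k)\<^sup>2)"
    have "s^2 = 1 + 4 * (beta k)\<^sup>2" unfolding s_def by (simp add: add_nonneg_nonneg)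
    moreover have bs: "beta (Suc k) = (1 + s) / 2" using brec k by (simp add: s_def)
    moreover have "((1 + s) / 2)\<^sup>2 - (1 + s) / 2 = (s^2 - 1) / 4"
      by (simp add: power2_eq_square field_simps)
    ultimately show ?thesis by (simp only: bs) simp
  qed
  show "(real k + 1) / 2 \<le> beta k \<and> 1 \<le> beta k \<and> (beta (Suc k))\<^sup>2 - beta (Suc k) = (beta k)\<^sup>2"
    using lb[OF k] k sq by simp
qed

lemma main:
  fixes f :: "real^'d \<Rightarrow> real"
  assumes A: "accel_ls f g L xs x y lam beta"
  shows "(\<forall>k\<ge>1. lam k \<ge> 1 / (3 * L)) \<and>
         (\<forall>k\<ge>1. f (y (Suc k)) - f xs \<le> 6 * L * (norm (x 1 - xs))\<^sup>2 / (real k)\<^sup>2)"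
proof -
  from A have cv: "convex_on UNIV f" and der: "\<forall>z. (f has_derivative (\<lambda>h. g z \<bullet> h)) (at z)"
    and L: "0 < L" and lip: "\<forall>u v. norm (g u - g v) \<le> L * norm (u - v)"
    and mn: "\<forall>z. f xs \<le> f z" and xy1: "x 1 = y 1" and lam0: "lam 0 \<ge> 1 / (3 * L)"
    and b1: "beta 1 = 1" and brec: "\<forall>k\<ge>1. beta (Suc k) = (1 + sqrt (1 + 4 * (beta k)\<^sup>2)) / 2"
    and lamdef: "\<forall>k\<ge>1. lam k = (GREATEST l. 0 < l \<and> l \<le> lam (k - 1) \<and>
          phi f g (x k) (2 * l) \<le> phi f g (x k) l + l / 2 * (- (norm (g (x k)))\<^sup>2))"
    and yrec: "\<forall>k\<ge>1. y (Suc k) = x k - lam k *\<^sub>R g (x k)"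
    and xrec: "\<forall>k\<ge>1. x (Suc k) = y (Suc k) + ((beta k - 1) / beta (Suc k)) *\<^sub>R (y (Suc k) - y k)"
    unfolding accel_ls_def by blast+
  have L3: "0 < 1 / (3 * L)" using L by simp
  have lamlb: "1 / (3 * L) \<le> lam k" for k
  proof (induction k)
    case 0 then show ?case using lam0 .
  next
    case (Suc k)
    have "min (lam k) (1 / (3 * L)) \<le> lam (Suc k)"
      using greatest_ls[OF der lip L, of "lam k" "x (Suc k)"] Suc L3 lamdef by simp
    then show ?case using Suc by simp
  qed
  have lampos: "0 < lam k" for k using lamlb[of k] L3 by linarith
  have lamP: "lam k \<le> lam (k - 1) \<and>
      phi f g (x k) (2 * lam k) \<le> phi f g (x k) (lam k) + lam k / 2 * (- (norm (g (x k)))\<^sup>2)"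
    if "1 \<le> k" for k
    using greatest_ls[OF der lip L lampos[of "k - 1"], of "x k"] lamdef that by simp
  have bf: "\<forall>k\<ge>1. (real k + 1) / 2 \<le> beta k \<and> 1 \<le> beta k \<and> (beta (Suc k))\<^sup>2 - beta (Suc k) = (beta k)\<^sup>2"
    by (rule beta_facts[OF b1 brec])
  define v where "v k = f (y k) - f xs" for k
  have vnn: "0 \<le> v k" for k using mn by (simp add: v_def)
  define u where "u k = beta k *\<^sub>R y (Suc k) - (beta k - 1) *\<^sub>R y k - xs" for k
  define R where "R = (norm (x 1 - xs))\<^sup>2"
  define E where "E k = lam k * (beta k)\<^sup>2 * v (Suc k) + (norm (u k))\<^sup>2 / 2" for k
  have core: "lam k * (beta k)\<^sup>2 * v (Suc k) + (norm (u k))\<^sup>2 / 2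
      \<le> lam k * ((beta k)\<^sup>2 - beta k) * v k
         + (norm (beta k *\<^sub>R x k - (beta k - 1) *\<^sub>R y k - xs))\<^sup>2 / 2"
    if k: "1 \<le> k" for k
  proof -
    define t where "t = beta k"
    define l where "l = lam k"
    have t1: "1 \<le> t" using bf k by (simp add: t_def)
    have l0: "0 < l" using lampos by (simp add: l_def)
    define z where "z = (1 - 1 / t) *\<^sub>R y k + (1 / t) *\<^sub>R xs"
    have fz: "f z \<le> (1 - 1 / t) * f (y k) + (1 / t) * f xs"
      unfolding z_def by (rule convex_onD[OF cv]) (use t1 in auto)
    have ys: "y (Suc k) = x k - l *\<^sub>R g (x k)" using yrec k by (simp add: l_def)
    have ki: "f (y (Suc k)) - f z \<le> ((norm (x k - z))\<^sup>2 - (norm (y (Suc k) - z))\<^sup>2) / (2 * l)"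
      unfolding ys using key_ineq[OF cv der l0] lamP[OF k] by (simp add: l_def)
    have tz: "t *\<^sub>R z = (t - 1) *\<^sub>R y k + xs"
      using t1 by (simp add: z_def scaleR_add_right scaleR_diff_left scaleR_diff_right)
    have e1: "t *\<^sub>R (x k - z) = t *\<^sub>R x k - (t - 1) *\<^sub>R y k - xs"
      by (simp add: scaleR_diff_right tz algebra_simps)
    have e2: "t *\<^sub>R (y (Suc k) - z) = u k"
      unfolding u_def t_def[symmetric] by (simp add: scaleR_diff_right tz algebra_simps)
    have n1: "t^2 * (norm (x k - z))\<^sup>2 = (norm (t *\<^sub>R x k - (t - 1) *\<^sub>R y k - xs))\<^sup>2"
      unfolding e1[symmetric] using t1 by (simp add: power_mult_distrib)
    have n2: "t^2 * (norm (y (Suc k) - z))\<^sup>2 = (norm (u k))\<^sup>2"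
      unfolding e2[symmetric] using t1 by (simp add: power_mult_distrib)
    define A where "A = (norm (x k - z))\<^sup>2"
    define B where "B = (norm (y (Suc k) - z))\<^sup>2"
    have "v (Suc k) \<le> (1 - 1 / t) * v k + (A - B) / (2 * l)"
      using ki fz unfolding v_def A_def B_def by (simp add: algebra_simps)
    then have "l * t^2 * v (Suc k) \<le> l * t^2 * ((1 - 1 / t) * v k + (A - B) / (2 * l))"
      using l0 by (intro mult_left_mono) auto
    also have "\<dots> = l * (t^2 - t) * v k + (t^2 * A - t^2 * B) / 2"
      using l0 t1 by (simp add: field_simps power2_eq_square)
    finally have "l * t^2 * v (Suc k) \<le> l * (t^2 - t) * v k + (t^2 * A - t^2 * B) / 2" .
    then show ?thesis unfolding A_def B_def n1 n2 unfolding t_def l_def by (simp add: field_simps)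
  qed
  have Ebound: "E k \<le> R / 2" if "1 \<le> k" for k
    using that
  proof (induction k rule: dec_induct)
    case base
    have "E 1 \<le> lam 1 * ((beta 1)\<^sup>2 - beta 1) * v 1
         + (norm (beta 1 *\<^sub>R x 1 - (beta 1 - 1) *\<^sub>R y 1 - xs))\<^sup>2 / 2"
      using core[of 1] by (simp add: E_def)
    then show ?case using b1 by (simp add: R_def)
  next
    case (step j)
    define k where "k = Suc j"
    have k: "1 \<le> k" by (simp add: k_def)
    have tb: "(beta k)\<^sup>2 - beta k = (beta j)\<^sup>2" using bf step(1) by (simp add: k_def)
    have tpos: "beta k \<noteq> 0" using bf k by fastforce
    have xk: "beta k *\<^sub>R x k = beta k *\<^sub>R y k + (beta j - 1) *\<^sub>R (y k - y j)"
      using xrec step(1) tpos by (simp add: k_def scaleR_add_right)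
    have p: "beta k *\<^sub>R x k - (beta k - 1) *\<^sub>R y k - xs = u j"
      unfolding xk by (simp add: u_def k_def algebra_simps)
    have "E k \<le> lam k * (beta j)\<^sup>2 * v k + (norm (u j))\<^sup>2 / 2"
      using core[OF k] unfolding tb p by (simp add: E_def)
    also have "lam k * (beta j)\<^sup>2 * v k \<le> lam j * (beta j)\<^sup>2 * v k"
      using lamP[OF k] vnn[of k] by (intro mult_right_mono) (auto simp: k_def)
    then have "lam k * (beta j)\<^sup>2 * v k + (norm (u j))\<^sup>2 / 2 \<le> E j"
      by (simp add: E_def k_def)
    finally show ?case using step(3) by (simp add: k_def)
  qed
  show ?thesis
  proof (intro conjI allI impI)
    fix k :: nat assume k: "1 \<le> k"
    show "1 / (3 * L) \<le> lam k" by (rule lamlb)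
    have "lam k * (beta k)\<^sup>2 * v (Suc k) \<le> R / 2"
      using Ebound[OF k] unfolding E_def by (smt (verit) zero_le_power2 divide_nonneg_nonneg)
    moreover have "(1 / (3 * L)) * ((real k)\<^sup>2 / 4) \<le> lam k * (beta k)\<^sup>2"
    proof (rule mult_mono)
      have "real k / 2 \<le> beta k" using bf k by force
      then have "(real k / 2)^2 \<le> (beta k)^2" by (intro power_mono) auto
      then show "(real k)\<^sup>2 / 4 \<le> (beta k)\<^sup>2" by (simp add: power_divide)
    qed (use lamlb[of k] lampos[of k] in auto)
    ultimately have "(1 / (3 * L)) * ((real k)\<^sup>2 / 4) * v (Suc k) \<le> R / 2"
      using vnn[of "Suc k"] by (meson mult_right_mono order_trans)
    then have "(real k)\<^sup>2 * v (Suc k) \<le> 6 * L * R"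
      using L by (simp add: field_simps)
    then show "f (y (Suc k)) - f xs \<le> 6 * L * (norm (x 1 - xs))\<^sup>2 / (real k)\<^sup>2"
      using k by (simp add: field_simps v_def R_def)
  qed
qed

theorem corollary3p2:
  "\<exists>C :: real^'d \<Rightarrow> real^'d \<Rightarrow> real \<Rightarrow> real.
     \<forall>(f :: real^'d \<Rightarrow> real) g L xs x y lam beta.
       accel_ls f g L xs x y lam beta \<longrightarrow>
         (\<forall>k\<ge>1. lam k \<ge> 1 / (3 * L)) \<and>
         (\<forall>k\<ge>1. f (y (Suc k)) - f xs \<le> C (x 1) xs L / (real k)\<^sup>2)"
  by (rule exI[of _ "\<lambda>a b L. 6 * L * (norm (a - b))\<^sup>2"]) (use main in blast)

end
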